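(* Suppose Assumptions 1–4 hold and $p$ is convex. Suppose also that $p(Q)=0$ for some $Q>0$ and that the ratio $\mu=\partial_+p(0)/\partial_-p(Q)$ is finite. Then every Cournot candidate $\mathbf{x}$ satisfies $\gamma(\mathbf{x})\ge f(\mu)$.
   Context: Cournot model: $N$ suppliers, inverse demand $p:[0,\infty)\to[0,\infty)$, supplier $n$ has cost $C_n:[0,\infty)\to[0,\infty)$ and chooses $x_n\ge0$; $X=\sum_n x_n$. $\partial_\pm$ denote right/left derivatives; $C_n'(0)$ is the right derivative at $0$. Assumption 1: each $C_n$ is convex, continuous, nondecreasing on $[0,\infty)$, continuously differentiable on $(0,\infty)$, with $C_n(0)=0$. Assumption 2: $p$ is continuous, nonnegative, nonincreasing, $p(0)>0$; its right derivative at $0$ exists and at every $q>0$ its left and right derivatives exist. Assumption 3: there exists $R>0$ such that $p(R)\le\min_n C_n'(0)$. Assumption 4: $p(0)>\min_n C_n'(0)$. Social welfare of $\mathbf{x}\ge0$: $W(\mathbf{x})=\int_0^X p(q)\,dq-\sum_{n=1}^N C_n(x_n)$; a social optimum $\mathbf{x}^S$ maximizes $W$. Efficiency: $\gamma(\mathbf{x})=W(\mathbf{x})/W(\mathbf{x}^S)$. A nonnegative vector $\mathbf{x}$ is a Cournot candidate if for every $n$: $C_n'(x_n)\le p(X)+x_n\,\partial_-p(X)$ whenever $x_n>0$, and $C_n'(x_n)\ge p(X)+x_n\,\partial_+p(X)$. For $\overline c\ge1$: $f(\overline c)=\dfrac{\phi^2+2}{\phi^2+2\phi+\overline c}$ with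 $\phi=\max\left\{\dfrac{2-\overline c+\sqrt{\overline c^{\,2}-4\overline c+12}}{2},1\right\}$. *)

theory Defs
  imports "HOL-Analysis.Analysis"
begin

definition right_deriv :: "(real \<Rightarrow> real) \<Rightarrow> real \<Rightarrow> real" where
  "right_deriv f x = (THE d. (f has_real_derivative d) (at_right x))"

definition left_deriv :: "(real \<Rightarrow> real) \<Rightarrow> real \<Rightarrow> real" where
  "left_deriv f x = (THE d. (f has_real_derivative d) (at_left x))"

definition cost_deriv :: "(real \<Rightarrow> real) \<Rightarrow> real \<Rightarrow> real" where
  "cost_deriv C x = (if x = 0 then right_deriv C 0 else deriv C x)"

definition cost_ok :: "(real \<Rightarrow> real) \<Rightarrow> bool" where
  "cost_ok C \<longleftrightarrow> (\<forall>x\<ge>0. C x \<ge> 0) \<and> convex_on {0..} C \<and> continuous_on {0..} C \<and>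
     (\<forall>x y. 0 \<le> x \<longrightarrow> x \<le> y \<longrightarrow> C x \<le> C y) \<and>
     (\<forall>x>0. C differentiable (at x)) \<and> continuous_on {0<..} (deriv C) \<and> C 0 = 0"

definition demand_ok :: "(real \<Rightarrow> real) \<Rightarrow> bool" where
  "demand_ok p \<longleftrightarrow> continuous_on {0..} p \<and> (\<forall>q\<ge>0. p q \<ge> 0) \<and>
     (\<forall>x y. 0 \<le> x \<longrightarrow> x \<le> y \<longrightarrow> p y \<le> p x) \<and> p 0 > 0 \<and>
     (\<forall>q\<ge>0. \<exists>d. (p has_real_derivative d) (at_right q)) \<and>
     (\<forall>q>0. \<exists>d. (p has_real_derivative d) (at_left q))"

definition min_mc0 :: "nat \<Rightarrow> (nat \<Rightarrow> real \<Rightarrow> real) \<Rightarrow> real" where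
  "min_mc0 N C = Min ((\<lambda>n. cost_deriv (C n) 0) ` {..<N})"

definition total :: "nat \<Rightarrow> (nat \<Rightarrow> real) \<Rightarrow> real" where
  "total N x = (\<Sum>n<N. x n)"

definition nonneg_vec :: "nat \<Rightarrow> (nat \<Rightarrow> real) \<Rightarrow> bool" where
  "nonneg_vec N x \<longleftrightarrow> (\<forall>n<N. x n \<ge> 0)"

definition welfare :: "nat \<Rightarrow> (real \<Rightarrow> real) \<Rightarrow> (nat \<Rightarrow> real \<Rightarrow> real) \<Rightarrow> (nat \<Rightarrow> real) \<Rightarrow> real" where
  "welfare N p C x = integral {0..total N x} p - (\<Sum>n<N. C n (x n))"

definition social_optimum :: "nat \<Rightarrow> (real \<Rightarrow> real) \<Rightarrow> (nat \<Rightarrow> real \<Rightarrow> real) \<Rightarrow> (nat \<Rightarrow> real) \<Rightarrow> bool" where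
  "social_optimum N p C xS \<longleftrightarrow> nonneg_vec N xS \<and>
     (\<forall>x. nonneg_vec N x \<longrightarrow> welfare N p C x \<le> welfare N p C xS)"

definition efficiency :: "nat \<Rightarrow> (real \<Rightarrow> real) \<Rightarrow> (nat \<Rightarrow> real \<Rightarrow> real) \<Rightarrow> (nat \<Rightarrow> real) \<Rightarrow> (nat \<Rightarrow> real) \<Rightarrow> real" where
  "efficiency N p C xS x = welfare N p C x / welfare N p C xS"

definition cournot_candidate :: "nat \<Rightarrow> (real \<Rightarrow> real) \<Rightarrow> (nat \<Rightarrow> real \<Rightarrow> real) \<Rightarrow> (nat \<Rightarrow> real) \<Rightarrow> bool" where
  "cournot_candidate N p C x \<longleftrightarrow> nonneg_vec N x \<and>
     (\<forall>n<N. (x n > 0 \<longrightarrow> cost_deriv (C n) (x n) \<le> p (total N x) + x n * left_deriv p (total N x)) \<and>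
            cost_deriv (C n) (x n) \<ge> p (total N x) + x n * right_deriv p (total N x))"

definition phi_bound :: "real \<Rightarrow> real" where
  "phi_bound c = max ((2 - c + sqrt (c\<^sup>2 - 4 * c + 12)) / 2) 1"

definition f_bound :: "real \<Rightarrow> real" where
  "f_bound c = ((phi_bound c)\<^sup>2 + 2) / ((phi_bound c)\<^sup>2 + 2 * phi_bound c + c)"

end

theory Submission
  imports Defs
begin


lemma rd_eq: "(f has_real_derivative d) (at_right x) \<Longrightarrow> right_deriv f x = d"
  unfolding right_deriv_def
  by (rule the_equality) (auto intro: has_field_derivative_unique)

lemma ld_eq: "(f has_real_derivative d) (at_left x) \<Longrightarrow> left_deriv f x = d"
  unfolding left_deriv_def
  by (rule the_equality) (auto intro: has_field_derivative_unique)

lemma conv_L1: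
  fixes f :: "real \<Rightarrow> real"
  assumes cv: "convex_on {0..} f" and z: "0 \<le> z" "z < x"
    and L: "(f has_real_derivative L) (at_left x)"
  shows "(f x - f z) / (x - z) \<le> L"
proof -
  have t: "((\<lambda>y. (f y - f x) / (y - x)) \<longlongrightarrow> L) (at_left x)"
    using L by (simp add: has_field_derivative_iff)
  have "eventually (\<lambda>y. y \<in> {z<..<x}) (at_left x)"
    using z eventually_at_left_real by blast
  then have "eventually (\<lambda>y. (f x - f z) / (x - z) \<le> (f y - f x) / (y - x)) (at_left x)"
  proof (rule eventually_mono)
    fix y assume y: "y \<in> {z<..<x}"
    have "(f z - f x) / (z - x) \<le> (f y - f x) / (y - x)"
      using convex_on_slope_le(2)[OF cv, of z x y] y z by auto
    moreover have "(f z - f x) / (z - x) = (f x - f z) / (x - z)"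
      by (simp add: divide_simps) argo
    ultimately show "(f x - f z) / (x - z) \<le> (f y - f x) / (y - x)" by simp
  qed
  then show ?thesis using t by (intro tendsto_lowerbound) auto
qed

lemma conv_L2:
  fixes f :: "real \<Rightarrow> real"
  assumes cv: "convex_on {0..} f" and z: "0 \<le> x" "x < z"
    and R: "(f has_real_derivative R) (at_right x)"
  shows "R \<le> (f z - f x) / (z - x)"
proof -
  have t: "((\<lambda>y. (f y - f x) / (y - x)) \<longlongrightarrow> R) (at_right x)"
    using R by (simp add: has_field_derivative_iff)
  have "eventually (\<lambda>y. y \<in> {x<..<z}) (at_right x)"
    using z eventually_at_right_real by blast
  then have "eventually (\<lambda>y. (f y - f x) / (y - x) \<le> (f z - f x) / (z - x)) (at_right x)"
  proof (rule eventually_mono)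
    fix y assume y: "y \<in> {x<..<z}"
    have "(f x - f y) / (x - y) \<le> (f x - f z) / (x - z)"
      using convex_on_slope_le(1)[OF cv, of x z y] y z by auto
    moreover have "(f x - f y) / (x - y) = (f y - f x) / (y - x)"
      by (simp add: divide_simps) argo
    moreover have "(f x - f z) / (x - z) = (f z - f x) / (z - x)"
      by (simp add: divide_simps) argo
    ultimately show "(f y - f x) / (y - x) \<le> (f z - f x) / (z - x)" by simp
  qed
  then show ?thesis using t by (intro tendsto_upperbound) auto
qed

lemma conv_L3:
  fixes f :: "real \<Rightarrow> real"
  assumes cv: "convex_on {0..} f" and x: "0 < x"
    and L: "(f has_real_derivative L) (at_left x)"
    and R: "(f has_real_derivative R) (at_right x)"
  shows "L \<le> R"
proof -
  have t: "((\<lambda>y. (f y - f x) / (y - x)) \<longlongrightarrow> L) (at_left x)"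
    using L by (simp add: has_field_derivative_iff)
  have "eventually (\<lambda>y. y \<in> {0<..<x}) (at_left x)"
    using x eventually_at_left_real by blast
  then have "eventually (\<lambda>y. (f y - f x) / (y - x) \<le> R) (at_left x)"
  proof (rule eventually_mono)
    fix y assume y: "y \<in> {0<..<x}"
    have "(f x - f y) / (x - y) \<le> R" 
    proof -
      have t2: "((\<lambda>u. (f u - f x) / (u - x)) \<longlongrightarrow> R) (at_right x)"
        using R by (simp add: has_field_derivative_iff)
      have "eventually (\<lambda>u. u \<in> {x<..<x+1}) (at_right x)"
        using eventually_at_right_real by simp
      then have "eventually (\<lambda>u. (f x - f y) / (x - y) \<le> (f u - f x) / (u - x)) (at_right x)"
      proof (rule eventually_mono)
        fix u assume u: "u \<in> {x<..<x+1}"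
        have "(f y - f x) / (y - x) \<le> (f y - f u) / (y - u)"
          using convex_on_slope_le(1)[OF cv, of y u x] y u by auto
        also have "\<dots> \<le> (f x - f u) / (x - u)"
          using convex_on_slope_le(2)[OF cv, of y u x] y u by auto
        finally have "(f y - f x) / (y - x) \<le> (f x - f u) / (x - u)" .
        moreover have "(f y - f x) / (y - x) = (f x - f y) / (x - y)"
          by (simp add: divide_simps) argo
        moreover have "(f x - f u) / (x - u) = (f u - f x) / (u - x)"
          by (simp add: divide_simps) argo
        ultimately show "(f x - f y) / (x - y) \<le> (f u - f x) / (u - x)" by simp
      qed
      then show ?thesis using t2 by (intro tendsto_lowerbound) auto
    qed
    moreover have "(f x - f y) / (x - y) = (f y - f x) / (y - x)"
      by (simp add: divide_simps) argo
    ultimately show "(f y - f x) / (y - x) \<le> R" by simp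
  qed
  then show ?thesis using t by (intro tendsto_upperbound) auto
qed



lemma rd_nonneg:
  fixes f :: "real \<Rightarrow> real"
  assumes mono: "\<And>u v. x \<le> u \<Longrightarrow> u \<le> v \<Longrightarrow> f u \<le> f v"
    and R: "(f has_real_derivative R) (at_right x)"
  shows "R \<ge> 0"
proof -
  have t: "((\<lambda>y. (f y - f x) / (y - x)) \<longlongrightarrow> R) (at_right x)"
    using R by (simp add: has_field_derivative_iff)
  have "eventually (\<lambda>y. y \<in> {x<..<x+1}) (at_right x)"
    using eventually_at_right_real by simp
  then have "eventually (\<lambda>y. 0 \<le> (f y - f x) / (y - x)) (at_right x)"
    by (rule eventually_mono) (use mono in auto)
  then show ?thesis using t by (intro tendsto_lowerbound) auto
qed

lemma rd_nonpos:
  fixes f :: "real \<Rightarrow> real"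
  assumes mono: "\<And>u v. x \<le> u \<Longrightarrow> u \<le> v \<Longrightarrow> f v \<le> f u"
    and R: "(f has_real_derivative R) (at_right x)"
  shows "R \<le> 0"
proof -
  have t: "((\<lambda>y. (f y - f x) / (y - x)) \<longlongrightarrow> R) (at_right x)"
    using R by (simp add: has_field_derivative_iff)
  have "eventually (\<lambda>y. y \<in> {x<..<x+1}) (at_right x)"
    using eventually_at_right_real by simp
  then have "eventually (\<lambda>y. (f y - f x) / (y - x) \<le> 0) (at_right x)"
    by (rule eventually_mono) (use mono in \<open>auto simp: divide_le_0_iff\<close>)
  then show ?thesis using t by (intro tendsto_upperbound) auto
qed

lemma ld_nonpos:
  fixes f :: "real \<Rightarrow> real"
  assumes mono: "\<And>u v. 0 \<le> u \<Longrightarrow> u \<le> v \<Longrightarrow> f v \<le> f u" and x: "0 < x"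
    and L: "(f has_real_derivative L) (at_left x)"
  shows "L \<le> 0"
proof -
  have t: "((\<lambda>y. (f y - f x) / (y - x)) \<longlongrightarrow> L) (at_left x)"
    using L by (simp add: has_field_derivative_iff)
  have "eventually (\<lambda>y. y \<in> {0<..<x}) (at_left x)"
    using x eventually_at_left_real by blast
  then have "eventually (\<lambda>y. (f y - f x) / (y - x) \<le> 0) (at_left x)"
  proof (rule eventually_mono)
    fix y assume y: "y \<in> {0<..<x}"
    then have "f x \<le> f y" using mono by auto
    then show "(f y - f x) / (y - x) \<le> 0" using y by (auto simp: divide_le_0_iff)
  qed
  then show ?thesis using t by (intro tendsto_upperbound) auto
qed

lemma subgrad:
  fixes f :: "real \<Rightarrow> real"
  assumes cv: "convex_on {0..} f" and x: "0 \<le> x" and y: "0 \<le> y"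
    and R: "(f has_real_derivative R) (at_right x)"
    and L: "0 < x \<Longrightarrow> (f has_real_derivative R) (at_left x)"
  shows "f y \<ge> f x + R * (y - x)"
proof (cases y x rule: linorder_cases)
  case less
  then have "0 < x" using y by simp
  then have "(f x - f y) / (x - y) \<le> R" using conv_L1[OF cv y less L] by auto
  then show ?thesis using less by (simp add: divide_le_eq algebra_simps)
next
  case equal then show ?thesis by simp
next
  case greater
  then have "R \<le> (f y - f x) / (y - x)" using conv_L2[OF cv x greater R] by auto
  then show ?thesis using greater by (simp add: le_divide_eq algebra_simps)
qed

lemma cost_derivs:
  assumes C: "cost_ok C" and x: "0 \<le> x"
  shows "(C has_real_derivative cost_deriv C x) (at_right x)"
    and "0 < x \<Longrightarrow> (C has_real_derivative cost_deriv C x) (at_left x)"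
proof -
  have cv: "convex_on {0..} C" and mono: "\<And>u v. 0 \<le> u \<Longrightarrow> u \<le> v \<Longrightarrow> C u \<le> C v"
    and dif: "\<And>u. u > 0 \<Longrightarrow> C differentiable (at u)"
    using C unfolding cost_ok_def by auto
  show "(C has_real_derivative cost_deriv C x) (at_right x)"
  proof (cases "x = 0")
    case True
    define D where "D = (\<lambda>y. (C y - C 0) / (y - 0))"
    have "(D \<longlongrightarrow> Inf (D ` ({0<..} \<inter> UNIV))) (at 0 within ({0<..} \<inter> UNIV))"
    proof (rule Lim_right_bound[where K=0])
      fix a b :: real assume "0 < a" "a \<le> b"
      then show "D a \<le> D b"
      proof (cases "a = b")
        case False
        then have "(C 0 - C a) / (0 - a) \<le> (C 0 - C b) / (0 - b)"
          using convex_on_slope_le(1)[OF cv, of 0 b a] \<open>0 < a\<close> \<open>a \<le> b\<close> by auto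
        moreover have "(C 0 - C a) / (0 - a) = D a" "(C 0 - C b) / (0 - b) = D b"
          unfolding D_def by (simp_all add: divide_simps) 
        ultimately show ?thesis by simp
      qed simp
    next
      fix a :: real assume "0 < a"
      then show "0 \<le> D a" unfolding D_def using mono[of 0 a] by auto
    qed
    then have "(C has_real_derivative Inf (D ` ({0<..} \<inter> UNIV))) (at_right 0)"
      unfolding has_field_derivative_iff D_def by simp
    moreover then have "cost_deriv C 0 = Inf (D ` ({0<..} \<inter> UNIV))"
      unfolding cost_deriv_def using rd_eq by simp
    ultimately show ?thesis using True by simp
  next
    case False
    then have "x > 0" using x by simp
    then have "(C has_real_derivative deriv C x) (at x)"
      using dif DERIV_deriv_iff_real_differentiable by blast
    then show ?thesis using False unfolding cost_deriv_def
      by (simp add: has_field_derivative_at_within)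
  qed
  assume "0 < x"
  then have "(C has_real_derivative deriv C x) (at x)"
    using dif DERIV_deriv_iff_real_differentiable by blast
  then show "(C has_real_derivative cost_deriv C x) (at_left x)"
    using \<open>0 < x\<close> unfolding cost_deriv_def
    by (simp add: has_field_derivative_at_within)
qed

lemma cost_sub:
  assumes C: "cost_ok C" and x: "0 \<le> x" and y: "0 \<le> y"
  shows "C y \<ge> C x + cost_deriv C x * (y - x)" and "cost_deriv C x \<ge> 0"
proof -
  have cv: "convex_on {0..} C" and mono: "\<And>u v. 0 \<le> u \<Longrightarrow> u \<le> v \<Longrightarrow> C u \<le> C v"
    using C unfolding cost_ok_def by auto
  show "C y \<ge> C x + cost_deriv C x * (y - x)"
    by (rule subgrad[OF cv x y cost_derivs(1)[OF C x] cost_derivs(2)[OF C x]])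
  show "cost_deriv C x \<ge> 0"
    by (rule rd_nonneg[OF _ cost_derivs(1)[OF C x]]) (use mono x in auto)
qed



lemma lin_int:
  fixes a b c m :: real
  assumes "a \<le> b"
  shows "((\<lambda>q. c + m * q) has_integral (c * (b - a) + m * (b\<^sup>2 - a\<^sup>2) / 2)) {a..b}"
proof -
  have "((\<lambda>q. c + m * q) has_integral ((\<lambda>q. c * q + m * q\<^sup>2 / 2) b - (\<lambda>q. c * q + m * q\<^sup>2 / 2) a)) {a..b}"
  proof (rule fundamental_theorem_of_calculus[OF assms])
    fix x :: real assume "x \<in> {a..b}"
    have "((\<lambda>q. c * q + m * q\<^sup>2 / 2) has_real_derivative (c + m * x)) (at x within {a..b})"
      by (auto intro!: derivative_eq_intros simp: power2_eq_square)
    then show "((\<lambda>q. c * q + m * q\<^sup>2 / 2) has_vector_derivative (c + m * x)) (at x within {a..b})"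
      by (simp add: has_real_derivative_iff_has_vector_derivative)
  qed
  then show ?thesis by (simp add: algebra_simps diff_divide_distrib)
qed

lemma int_lower:
  fixes p :: "real \<Rightarrow> real"
  assumes cv: "convex_on {0..} p" and pc: "continuous_on {0..} p" and Z: "0 < Z"
    and L: "(p has_real_derivative L) (at_left Z)"
  shows "integral {0..Z} p \<ge> p Z * Z - L * Z\<^sup>2 / 2"
proof -
  have li: "((\<lambda>q. (p Z - L * Z) + L * q) has_integral ((p Z - L * Z) * (Z - 0) + L * (Z\<^sup>2 - 0\<^sup>2) / 2)) {0..Z}"
    using lin_int[of 0 Z "p Z - L * Z" L] Z by simp
  have "integral {0..Z} (\<lambda>q. (p Z - L * Z) + L * q) \<le> integral {0..Z} p"
  proof (rule integral_le)
    show "(\<lambda>q. (p Z - L * Z) + L * q) integrable_on {0..Z}" using li by blast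
    show "p integrable_on {0..Z}"
      by (rule integrable_continuous_interval) (rule continuous_on_subset[OF pc], auto)
    fix q assume q: "q \<in> {0..Z}"
    show "(p Z - L * Z) + L * q \<le> p q"
    proof (cases "q = Z")
      case False
      then have "q < Z" using q by auto
      then have "(p Z - p q) / (Z - q) \<le> L" using conv_L1[OF cv _ _ L] q by auto
      then show ?thesis using \<open>q < Z\<close> by (simp add: divide_le_eq algebra_simps)
    qed simp
  qed
  also note integral_unique[OF li]
  finally show ?thesis by (simp add: algebra_simps power2_eq_square)
qed

lemma int_upper:
  fixes p :: "real \<Rightarrow> real"
  assumes pc: "continuous_on {0..} p" and X: "0 \<le> X" and Y: "0 \<le> Y" and g: "0 < g"
    and b: "0 \<le> \<beta>" "\<beta> \<le> p X"
    and lo: "\<And>q. 0 \<le> q \<Longrightarrow> q \<le> X \<Longrightarrow> p X \<le> p q"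
    and hi: "\<And>q. X \<le> q \<Longrightarrow> p q \<le> max (p X - g * (q - X)) 0"
  shows "integral {0..Y} p - \<beta> * Y \<le> integral {0..X} p - \<beta> * X + (p X - \<beta>)\<^sup>2 / (2 * g)"
proof -
  define a where "a = p X"
  define w where "w = a - \<beta>"
  have w0: "0 \<le> w" using b unfolding w_def a_def by simp
  have int: "\<And>u v. 0 \<le> u \<Longrightarrow> p integrable_on {u..v}"
    by (rule integrable_continuous_interval) (rule continuous_on_subset[OF pc], auto)
  have sq: "(p X - \<beta>)\<^sup>2 / (2 * g) \<ge> 0" using g by simp
  show ?thesis
  proof (cases "Y \<le> X")
    case True
    have "integral {0..Y} p + integral {Y..X} p = integral {0..X} p"
      using Henstock_Kurzweil_Integration.integral_combine[OF Y True int[OF order_refl, of X]] by simp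
    moreover have "integral {Y..X} (\<lambda>_. a) \<le> integral {Y..X} p"
      by (rule integral_le) (use int[OF Y] lo Y in \<open>auto simp: a_def\<close>)
    moreover have "integral {Y..X} (\<lambda>_. a) = a * (X - Y)" using True by simp
    moreover have "\<beta> * (X - Y) \<le> a * (X - Y)" using True b unfolding a_def
      by (intro mult_right_mono) auto
    ultimately show ?thesis using sq by (simp add: algebra_simps)
  next
    case False
    then have XY: "X < Y" by simp
    define M where "M = min Y (X + w / g)"
    have XM: "X \<le> M" "M \<le> Y" using XY w0 g unfolding M_def by auto
    have c1: "integral {0..X} p + integral {X..Y} p = integral {0..Y} p"
      using Henstock_Kurzweil_Integration.integral_combine[OF X _ int[OF order_refl, of Y]] XY by simp
    have c2: "integral {X..M} p + integral {M..Y} p = integral {X..Y} p"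
      using Henstock_Kurzweil_Integration.integral_combine[OF XM int[OF X, of Y]] X by simp
    have li: "((\<lambda>q. (a + g * X) + (- g) * q) has_integral ((a + g * X) * (M - X) + (- g) * (M\<^sup>2 - X\<^sup>2) / 2)) {X..M}"
      using lin_int XM by blast
    have i1: "integral {X..M} p \<le> (a + g * X) * (M - X) + (- g) * (M\<^sup>2 - X\<^sup>2) / 2"
    proof -
      have "integral {X..M} p \<le> integral {X..M} (\<lambda>q. (a + g * X) + (- g) * q)"
      proof (rule integral_le)
        show "p integrable_on {X..M}" using int X by blast
        show "(\<lambda>q. (a + g * X) + (- g) * q) integrable_on {X..M}" using li by blast
        fix q assume q: "q \<in> {X..M}"
        then have "q \<le> X + w / g" unfolding M_def by auto
        then have "g * (q - X) \<le> w" using g by (simp add: field_simps)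
        then have "a - g * (q - X) \<ge> 0" using b unfolding w_def a_def by simp
        then show "p q \<le> (a + g * X) + (- g) * q" using hi[of q] q unfolding a_def
          by (auto simp: algebra_simps)
      qed
      then show ?thesis using integral_unique[OF li] by simp
    qed
    have i2: "integral {M..Y} p \<le> \<beta> * (Y - M)"
    proof (cases "M = Y")
      case True then show ?thesis by simp
    next
      case False
      then have MM: "M = X + w / g" unfolding M_def by auto
      have "integral {M..Y} p \<le> integral {M..Y} (\<lambda>_. \<beta>)"
      proof (rule integral_le)
        show "p integrable_on {M..Y}" using int X XM by simp
        show "(\<lambda>_. \<beta>) integrable_on {M..Y}" by (rule integrable_const_ivl)
        fix q assume q: "q \<in> {M..Y}"
        then have "X + w / g \<le> q" using MM by simp
        then have "w \<le> g * (q - X)" using g by (simp add: field_simps)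
        then have "p X - g * (q - X) \<le> \<beta>" unfolding w_def a_def by simp
        then show "p q \<le> \<beta>" using hi[of q] q XM b by auto
      qed
      then show ?thesis using XM by (simp add: mult.commute)
    qed
    define m where "m = M - X"
    have key: "(a + g * X) * (M - X) + (- g) * (M\<^sup>2 - X\<^sup>2) / 2 + \<beta> * (Y - M) - \<beta> * Y
        = - \<beta> * X + (w * m - g * m\<^sup>2 / 2)"
      unfolding m_def w_def by (simp add: power2_eq_square field_simps)
    have "w * m - g * m\<^sup>2 / 2 \<le> w\<^sup>2 / (2 * g)"
    proof -
      have "0 \<le> (w - g * m)\<^sup>2" by simp
      then have "2 * g * (w * m - g * m\<^sup>2 / 2) \<le> w\<^sup>2"
        by (simp add: power2_eq_square algebra_simps)
      then show ?thesis using g by (simp add: field_simps)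
    qed
    then show ?thesis using c1 c2 i1 i2 key unfolding w_def a_def by linarith
  qed
qed



lemma phi_facts:
  fixes c :: real assumes c: "c \<ge> 1"
  shows "phi_bound c \<ge> 1"
    and "phi_bound c \<noteq> 1 \<Longrightarrow> c * phi_bound c = 2 + 2 * phi_bound c - (phi_bound c)\<^sup>2"
    and "phi_bound c = 1 \<Longrightarrow> c \<ge> 3 \<or> c * phi_bound c = 2 + 2 * phi_bound c - (phi_bound c)\<^sup>2"
proof -
  define S where "S = sqrt (c\<^sup>2 - 4 * c + 12)"
  have "0 \<le> (c - 2)\<^sup>2" by simp
  moreover have "(c - 2)\<^sup>2 + 8 = c\<^sup>2 - 4 * c + 12" by (simp add: power2_eq_square algebra_simps)
  ultimately have "0 \<le> c\<^sup>2 - 4 * c + 12" by linarith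
  then have S0: "S \<ge> 0" unfolding S_def by simp
  from \<open>0 \<le> c\<^sup>2 - 4 * c + 12\<close> have SS: "S\<^sup>2 = c\<^sup>2 - 4 * c + 12" unfolding S_def by simp
  define r where "r = (2 - c + S) / 2"
  have pb: "phi_bound c = max r 1" unfolding phi_bound_def r_def S_def by simp
  have root: "c * r = 2 + 2 * r - r\<^sup>2"
  proof -
    have "4 * (c * r - (2 + 2 * r - r\<^sup>2)) = S\<^sup>2 - (c\<^sup>2 - 4 * c + 12)"
      unfolding r_def by (simp add: power2_eq_square field_simps)
    then show ?thesis using SS by simp
  qed
  show "phi_bound c \<ge> 1" unfolding pb by simp
  show "phi_bound c \<noteq> 1 \<Longrightarrow> c * phi_bound c = 2 + 2 * phi_bound c - (phi_bound c)\<^sup>2"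
    unfolding pb using root by (auto simp: max_def split: if_splits)
  show "phi_bound c = 1 \<Longrightarrow> c \<ge> 3 \<or> c * phi_bound c = 2 + 2 * phi_bound c - (phi_bound c)\<^sup>2"
  proof -
    assume "phi_bound c = 1"
    show ?thesis
    proof (cases "r \<le> 1")
      case True
      then have "S \<le> c" unfolding r_def by simp
      then have "S\<^sup>2 \<le> c\<^sup>2" using S0 by (simp add: power_mono)
      then have "c \<ge> 3" using SS by simp
      then show ?thesis by simp
    next
      case False
      then have "phi_bound c = r" unfolding pb by simp
      then show ?thesis using root by simp
    qed
  qed
qed

lemma key_poly:
  fixes c X s :: real
  assumes c: "c \<ge> 1" and s: "0 \<le> s" "s \<le> X"
  shows "f_bound c * (X\<^sup>2 + 2 * s * X + c * s\<^sup>2) \<le> X\<^sup>2 + 2 * s\<^sup>2"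
    and "0 \<le> f_bound c" and "f_bound c \<le> 1"
proof -
  define \<phi> where "\<phi> = phi_bound c"
  have p1: "\<phi> \<ge> 1" using phi_facts(1)[OF c] unfolding \<phi>_def .
  define D where "D = \<phi>\<^sup>2 + 2 * \<phi> + c"
  have D0: "D > 0" unfolding D_def using p1 c by (smt (verit) zero_le_power2)
  have fb: "f_bound c = (\<phi>\<^sup>2 + 2) / D" unfolding f_bound_def D_def \<phi>_def by simp
  show "0 \<le> f_bound c" unfolding fb using D0 by simp
  show "f_bound c \<le> 1" unfolding fb using D0 p1 c unfolding D_def by simp
  have main: "(\<phi>\<^sup>2 + 2) * (X\<^sup>2 + 2 * s * X + c * s\<^sup>2) \<le> (X\<^sup>2 + 2 * s\<^sup>2) * D"
  proof -
    have cases: "c \<ge> 3 \<and> \<phi> = 1 \<or> c * \<phi> = 2 + 2 * \<phi> - \<phi>\<^sup>2"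
      using phi_facts(2,3)[OF c] unfolding \<phi>_def by blast
    then show ?thesis
    proof
      assume h: "c \<ge> 3 \<and> \<phi> = 1"
      have "0 \<le> (X - s) * (c * X + c * s - 6 * s)"
      proof (rule mult_nonneg_nonneg)
        show "0 \<le> X - s" using s by simp
        have "3 * (X + s) \<le> c * (X + s)" using h s by (intro mult_right_mono) auto
        then show "0 \<le> c * X + c * s - 6 * s" using s by (simp add: algebra_simps)
      qed
      then show ?thesis using h unfolding D_def by (simp add: algebra_simps power2_eq_square)
    next
      assume h: "c * \<phi> = 2 + 2 * \<phi> - \<phi>\<^sup>2"
      have id: "\<phi> * ((X\<^sup>2 + 2 * s\<^sup>2) * D - (\<phi>\<^sup>2 + 2) * (X\<^sup>2 + 2 * s * X + c * s\<^sup>2))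
          = (\<phi>\<^sup>2 + 2) * (X - \<phi> * s)\<^sup>2"
      proof -
        have "\<phi> * ((X\<^sup>2 + 2 * s\<^sup>2) * D - (\<phi>\<^sup>2 + 2) * (X\<^sup>2 + 2 * s * X + c * s\<^sup>2))
          = (c * \<phi>) * (X\<^sup>2 + 2 * s\<^sup>2 - (\<phi>\<^sup>2 + 2) * s\<^sup>2)
            + \<phi> * ((X\<^sup>2 + 2 * s\<^sup>2) * (\<phi>\<^sup>2 + 2 * \<phi>) - (\<phi>\<^sup>2 + 2) * (X\<^sup>2 + 2 * s * X))"
          unfolding D_def by (simp add: algebra_simps)
        also have "\<dots> = (\<phi>\<^sup>2 + 2) * (X - \<phi> * s)\<^sup>2"
          unfolding h by (simp add: algebra_simps power2_eq_square)
        finally show ?thesis .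
      qed
      have "0 \<le> \<phi> * ((X\<^sup>2 + 2 * s\<^sup>2) * D - (\<phi>\<^sup>2 + 2) * (X\<^sup>2 + 2 * s * X + c * s\<^sup>2))"
        unfolding id by simp
      then have "0 \<le> (X\<^sup>2 + 2 * s\<^sup>2) * D - (\<phi>\<^sup>2 + 2) * (X\<^sup>2 + 2 * s * X + c * s\<^sup>2)"
        using p1 by (simp add: zero_le_mult_iff)
      then show ?thesis by simp
    qed
  qed
  show "f_bound c * (X\<^sup>2 + 2 * s * X + c * s\<^sup>2) \<le> X\<^sup>2 + 2 * s\<^sup>2"
    unfolding fb using main D0 by (simp add: divide_simps mult.commute)
qed



lemma final_alg:
  fixes c I d s X w g h :: real
  assumes c: "c \<ge> 1" and s: "0 \<le> s" "s \<le> X" and d: "0 \<le> d" and I: "d * X\<^sup>2 / 2 \<le> I"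
    and w: "0 \<le> w" "w \<le> d * s" and dh: "d \<le> h" and g: "0 < g" and ch: "c = h / g"
  shows "f_bound c * (I + w * X + w\<^sup>2 / (2 * g)) \<le> I + d * s\<^sup>2"
proof -
  define f where "f = f_bound c"
  have f0: "0 \<le> f" and f1: "f \<le> 1" and kp: "f * (X\<^sup>2 + 2 * s * X + c * s\<^sup>2) \<le> X\<^sup>2 + 2 * s\<^sup>2"
    using key_poly[OF c s] unfolding f_def by auto
  have X0: "0 \<le> X" using s by simp
  have a1: "w * X \<le> d * s * X" using w X0 by (intro mult_right_mono) auto
  have "w\<^sup>2 \<le> (d * s)\<^sup>2" using w by (intro power_mono) auto
  also have "(d * s)\<^sup>2 \<le> d * h * s\<^sup>2"
  proof -
    have "d * d \<le> d * h" using dh d by (intro mult_left_mono) auto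
    then have "(d * d) * s\<^sup>2 \<le> (d * h) * s\<^sup>2" by (intro mult_right_mono) auto
    then show ?thesis by (simp add: power2_eq_square algebra_simps)
  qed
  finally have "w\<^sup>2 / (2 * g) \<le> d * h * s\<^sup>2 / (2 * g)" using g by (simp add: divide_right_mono)
  also have "\<dots> = c * d * s\<^sup>2 / 2" unfolding ch using g by (simp add: field_simps)
  finally have a2: "w\<^sup>2 / (2 * g) \<le> c * d * s\<^sup>2 / 2" .
  have "f * (I + w * X + w\<^sup>2 / (2 * g)) \<le> f * (I + d * s * X + c * d * s\<^sup>2 / 2)"
    using a1 a2 f0 by (intro mult_left_mono) auto
  also have "\<dots> = f * (I - d * X\<^sup>2 / 2) + (d / 2) * (f * (X\<^sup>2 + 2 * s * X + c * s\<^sup>2))"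
    by (simp add: algebra_simps power2_eq_square)
  also have "\<dots> \<le> (I - d * X\<^sup>2 / 2) + (d / 2) * (X\<^sup>2 + 2 * s\<^sup>2)"
  proof (rule add_mono)
    show "f * (I - d * X\<^sup>2 / 2) \<le> I - d * X\<^sup>2 / 2" using f1 I
      by (metis diff_ge_0_iff_ge mult_left_le_one_le f0)
    show "d / 2 * (f * (X\<^sup>2 + 2 * s * X + c * s\<^sup>2)) \<le> d / 2 * (X\<^sup>2 + 2 * s\<^sup>2)"
      using kp d by (intro mult_left_mono) auto
  qed
  also have "\<dots> = I + d * s\<^sup>2" by (simp add: algebra_simps)
  finally show ?thesis unfolding f_def .
qed



theorem corollary1:
  fixes N :: nat and p :: "real \<Rightarrow> real" and C :: "nat \<Rightarrow> real \<Rightarrow> real"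
    and Q :: real and xS x :: "nat \<Rightarrow> real"
  assumes N: "N \<ge> 1"
    and A1: "\<forall>n<N. cost_ok (C n)"
    and A2: "demand_ok p"
    and A3: "\<exists>R>0. p R \<le> min_mc0 N C"
    and A4: "p 0 > min_mc0 N C"
    and pconv: "convex_on {0..} p"
    and Q: "Q > 0" "p Q = 0"
    and fin: "left_deriv p Q \<noteq> 0"
    and opt: "social_optimum N p C xS"
    and cc: "cournot_candidate N p C x"
  shows "efficiency N p C xS x \<ge> f_bound (right_deriv p 0 / left_deriv p Q)"
proof -
  have pc: "continuous_on {0..} p" and pnn: "\<And>q. 0 \<le> q \<Longrightarrow> 0 \<le> p q"
    and pmono: "\<And>u v. 0 \<le> u \<Longrightarrow> u \<le> v \<Longrightarrow> p v \<le> p u"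
    and rdex: "\<And>q. 0 \<le> q \<Longrightarrow> \<exists>d. (p has_real_derivative d) (at_right q)"
    and ldex: "\<And>q. 0 < q \<Longrightarrow> \<exists>d. (p has_real_derivative d) (at_left q)"
    using A2 unfolding demand_ok_def by auto
  have xnn: "\<And>n. n < N \<Longrightarrow> 0 \<le> x n" using cc unfolding cournot_candidate_def nonneg_vec_def by auto
  define X where "X = total N x"
  define \<alpha> where "\<alpha> n = cost_deriv (C n) (x n)" for n
  define a where "a = p X"
  have candU: "\<And>n. n < N \<Longrightarrow> 0 < x n \<Longrightarrow> \<alpha> n \<le> a + x n * left_deriv p X"
   and candL: "\<And>n. n < N \<Longrightarrow> \<alpha> n \<ge> a + x n * right_deriv p X"
    using cc unfolding cournot_candidate_def \<alpha>_def a_def X_def by auto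
  have fin_N: "finite {..<N}" by simp
  have ne_N: "{..<N} \<noteq> {}" using N by (auto simp: lessThan_empty_iff)
  have X0: "0 \<le> X" unfolding X_def total_def using xnn by (intro sum_nonneg) auto
  have Xpos: "0 < X"
  proof (rule ccontr)
    assume "\<not> 0 < X"
    then have "X = 0" using X0 by simp
    then have "\<forall>n\<in>{..<N}. x n = 0" using sum_nonneg_eq_0_iff[OF fin_N, of x] xnn
      unfolding X_def total_def by auto
    then have "\<And>n. n < N \<Longrightarrow> p 0 \<le> cost_deriv (C n) 0"
      using candL unfolding \<alpha>_def a_def \<open>X = 0\<close> by fastforce
    then have "p 0 \<le> min_mc0 N C" unfolding min_mc0_def using fin_N ne_N by (auto simp: Min_ge_iff)
    then show False using A4 by simp
  qed
  obtain rX where rX: "(p has_real_derivative rX) (at_right X)" using rdex X0 by blast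
  obtain LX where LX: "(p has_real_derivative LX) (at_left X)" using ldex Xpos by blast
  obtain r0 where r0: "(p has_real_derivative r0) (at_right 0)" using rdex by blast
  obtain LQ where LQ: "(p has_real_derivative LQ) (at_left Q)" using ldex Q by blast
  have rXe: "right_deriv p X = rX" using rX by (rule rd_eq)
  have LXe: "left_deriv p X = LX" using LX by (rule ld_eq)
  have r0e: "right_deriv p 0 = r0" using r0 by (rule rd_eq)
  have LQe: "left_deriv p Q = LQ" using LQ by (rule ld_eq)
  define d where "d = - LX"
  define e where "e = - rX"
  define h where "h = - r0"
  define g where "g = - LQ"
  define c where "c = right_deriv p 0 / left_deriv p Q"
  have g0: "0 < g" using ld_nonpos[OF pmono Q(1) LQ] fin LQe unfolding g_def by simp
  have d0: "0 \<le> d" using ld_nonpos[OF pmono Xpos LX] unfolding d_def by simp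
  have e0: "0 \<le> e" using rd_nonpos[OF _ rX] pmono X0 unfolding e_def by force
  have ed: "e \<le> d" using conv_L3[OF pconv Xpos LX rX] unfolding d_def e_def by simp
  have dh: "d \<le> h"
  proof -
    have "r0 \<le> (p X - p 0) / (X - 0)" using conv_L2[OF pconv _ Xpos r0] by simp
    also have "\<dots> \<le> LX" using conv_L1[OF pconv _ Xpos LX] by simp
    finally show ?thesis unfolding d_def h_def by simp
  qed
  have gh: "g \<le> h"
  proof -
    have "r0 \<le> (p Q - p 0) / (Q - 0)" using conv_L2[OF pconv _ Q(1) r0] by simp
    also have "\<dots> \<le> LQ" using conv_L1[OF pconv _ Q(1) LQ] by simp
    finally show ?thesis unfolding g_def h_def by simp
  qed
  have ch: "c = h / g" unfolding c_def r0e LQe h_def g_def by simp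
  have c1: "c \<ge> 1" unfolding ch using gh g0 by simp
  define s where "s = Max (x ` {..<N})"
  have "s \<in> x ` {..<N}" unfolding s_def using fin_N ne_N by (intro Max_in) auto
  then obtain m where m: "m < N" "x m = s" by auto
  have s0: "0 \<le> s" using xnn m by auto
  have sle: "\<And>n. n < N \<Longrightarrow> x n \<le> s" unfolding s_def using fin_N by auto
  have sX: "s \<le> X" unfolding X_def total_def m(2)[symmetric]
    by (rule member_le_sum) (use m xnn in auto)
  have a0: "0 \<le> a" unfolding a_def using pnn X0 by simp
  have \<alpha>0: "\<And>n. n < N \<Longrightarrow> 0 \<le> \<alpha> n" unfolding \<alpha>_def using cost_sub(2) A1 xnn by blast
  define \<beta> where "\<beta> = min a (Min (\<alpha> ` {..<N}))"
  have \<beta>\<alpha>: "\<And>n. n < N \<Longrightarrow> \<beta> \<le> \<alpha> n" unfolding \<beta>_def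
    by (rule min.coboundedI2, rule Min_le) auto
  have \<beta>a: "\<beta> \<le> a" unfolding \<beta>_def by simp
  have \<beta>0: "0 \<le> \<beta>" unfolding \<beta>_def using a0 \<alpha>0 fin_N ne_N by (auto simp: Min_ge_iff)
  define w where "w = a - \<beta>"
  have w0: "0 \<le> w" unfolding w_def using \<beta>a by simp
  have wes: "w \<le> e * s"
  proof (cases "\<beta> = a")
    case True then show ?thesis unfolding w_def using e0 s0 by simp
  next
    case False
    then have "\<beta> = Min (\<alpha> ` {..<N})" unfolding \<beta>_def by auto
    moreover have "Min (\<alpha> ` {..<N}) \<in> \<alpha> ` {..<N}" using fin_N ne_N by (intro Min_in) auto
    ultimately obtain k where k: "k < N" "\<beta> = \<alpha> k" by auto
    have "a - \<alpha> k \<le> e * x k" using candL[OF k(1)] rXe unfolding e_def by (simp add: algebra_simps)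
    also have "\<dots> \<le> e * s" using sle[OF k(1)] e0 by (intro mult_left_mono)
    finally show ?thesis unfolding w_def k(2) .
  qed
  have wds: "w \<le> d * s" using wes ed s0 by (meson mult_right_mono order_trans)
  have lo: "\<And>q. 0 \<le> q \<Longrightarrow> q \<le> X \<Longrightarrow> p X \<le> p q" using pmono by blast
  have hi: "\<And>q. X \<le> q \<Longrightarrow> p q \<le> max (p X - g * (q - X)) 0"
  proof -
    fix q assume q: "X \<le> q"
    show "p q \<le> max (p X - g * (q - X)) 0"
    proof (cases "Q \<le> q")
      case True
      then have "p q \<le> 0" using pmono[of Q q] Q by simp
      then show ?thesis by simp
    next
      case False
      show ?thesis
      proof (cases "q = X")
        case True then show ?thesis by simp
      next
        case qX: False
        have XQ: "X < Q" using q False qX by simp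
        have cvi: "convex_on {X..Q} p" by (rule convex_on_subset[OF pconv]) (use X0 in auto)
        have "p q \<le> (p Q - p X) / (Q - X) * (q - X) + p X"
          using convex_onD_Icc'[OF cvi, of q] q False by simp
        also have "\<dots> \<le> LQ * (q - X) + p X"
          using conv_L1[OF pconv X0 XQ LQ] q by (intro add_right_mono mult_right_mono) auto
        finally show ?thesis unfolding g_def by (simp add: algebra_simps)
      qed
    qed
  qed
  define y where "y = xS"
  define Y where "Y = total N y"
  have ynn: "\<And>n. n < N \<Longrightarrow> 0 \<le> y n" using opt unfolding social_optimum_def nonneg_vec_def y_def by auto
  have Y0: "0 \<le> Y" unfolding Y_def total_def using ynn by (intro sum_nonneg) auto
  define K where "K = (\<Sum>n<N. \<alpha> n * x n - C n (x n))"
  have K0: "0 \<le> K" unfolding K_def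
  proof (rule sum_nonneg)
    fix n assume "n \<in> {..<N}"
    then have "C n 0 \<ge> C n (x n) + \<alpha> n * (0 - x n)"
      using cost_sub(1)[of "C n" "x n" 0] A1 xnn unfolding \<alpha>_def by auto
    moreover have "C n 0 = 0" using A1 \<open>n \<in> {..<N}\<close> unfolding cost_ok_def by auto
    ultimately show "0 \<le> \<alpha> n * x n - C n (x n)" by (simp add: algebra_simps)
  qed
  have costY: "(\<Sum>n<N. C n (y n)) \<ge> \<beta> * Y - K"
  proof -
    have "(\<Sum>n<N. C n (x n) + \<alpha> n * (y n - x n)) \<le> (\<Sum>n<N. C n (y n))"
      by (rule sum_mono) (use cost_sub(1) A1 xnn ynn in \<open>auto simp: \<alpha>_def\<close>)
    moreover have "(\<Sum>n<N. C n (x n) + \<alpha> n * (y n - x n)) = (\<Sum>n<N. \<alpha> n * y n) - K"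
      unfolding K_def by (simp add: sum_subtractf[symmetric] sum.distrib[symmetric] algebra_simps)
    moreover have "\<beta> * Y \<le> (\<Sum>n<N. \<alpha> n * y n)"
      unfolding Y_def total_def sum_distrib_left
      by (rule sum_mono) (use \<beta>\<alpha> ynn in \<open>auto intro: mult_right_mono\<close>)
    ultimately show ?thesis by linarith
  qed
  define I where "I = integral {0..X} p - a * X"
  have WY: "welfare N p C y \<le> I + w * X + w\<^sup>2 / (2 * g) + K"
  proof -
    have "welfare N p C y \<le> integral {0..Y} p - \<beta> * Y + K"
      using costY unfolding welfare_def Y_def by simp
    also have "integral {0..Y} p - \<beta> * Y \<le> integral {0..X} p - \<beta> * X + (p X - \<beta>)\<^sup>2 / (2 * g)"
      by (rule int_upper[OF pc X0 Y0 g0 \<beta>0 _ lo hi]) (use \<beta>a a_def in auto)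
    finally show ?thesis unfolding I_def w_def a_def by (simp add: algebra_simps)
  qed
  have costX: "(\<Sum>n<N. \<alpha> n * x n) \<le> a * X - d * s\<^sup>2"
  proof -
    have "(\<Sum>n<N. \<alpha> n * x n) \<le> (\<Sum>n<N. a * x n - d * (x n)\<^sup>2)"
    proof (rule sum_mono)
      fix n assume n: "n \<in> {..<N}"
      show "\<alpha> n * x n \<le> a * x n - d * (x n)\<^sup>2"
      proof (cases "x n = 0")
        case True then show ?thesis by simp
      next
        case False
        then have "0 < x n" using xnn n by force
        then have "\<alpha> n \<le> a - d * x n" using candU[of n] n LXe unfolding d_def by (auto simp: mult.commute)
        then have "\<alpha> n * x n \<le> (a - d * x n) * x n" using \<open>0 < x n\<close> by (intro mult_right_mono) auto
        then show ?thesis by (simp add: algebra_simps power2_eq_square)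
      qed
    qed
    also have "\<dots> = a * X - d * (\<Sum>n<N. (x n)\<^sup>2)"
      unfolding X_def total_def by (simp add: sum_subtractf sum_distrib_left)
    also have "(\<Sum>n<N. (x n)\<^sup>2) \<ge> (x m)\<^sup>2"
      using member_le_sum[of m "{..<N}" "\<lambda>n. (x n)\<^sup>2"] m by auto
    then have "a * X - d * (\<Sum>n<N. (x n)\<^sup>2) \<le> a * X - d * s\<^sup>2"
      using d0 m by (simp add: mult_left_mono)
    finally show ?thesis .
  qed
  have WX: "welfare N p C x \<ge> I + d * s\<^sup>2 + K"
  proof -
    have "welfare N p C x = integral {0..X} p - (\<Sum>n<N. \<alpha> n * x n) + K"
      unfolding welfare_def X_def K_def by (simp add: sum_subtractf)
    then show ?thesis using costX unfolding I_def by simp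
  qed
  have Ilow: "d * X\<^sup>2 / 2 \<le> I"
    using int_lower[OF pconv pc Xpos LX] unfolding I_def d_def a_def by simp
  define f where "f = f_bound c"
  have f0: "0 \<le> f" and f1: "f \<le> 1" using key_poly[OF c1 s0 sX] unfolding f_def by auto
  have fa: "f * (I + w * X + w\<^sup>2 / (2 * g)) \<le> I + d * s\<^sup>2"
    unfolding f_def by (rule final_alg[OF c1 s0 sX d0 Ilow w0 wds dh g0 ch])
  have main: "f * welfare N p C y \<le> welfare N p C x"
  proof -
    have "f * welfare N p C y \<le> f * (I + w * X + w\<^sup>2 / (2 * g) + K)"
      using WY f0 by (intro mult_left_mono)
    also have "\<dots> = f * (I + w * X + w\<^sup>2 / (2 * g)) + f * K" by (simp add: algebra_simps)
    also have "f * K \<le> K" using f1 K0 by (simp add: mult_left_le_one_le f0)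
    finally show ?thesis using fa WX by linarith
  qed
  have Wxpos: "0 < welfare N p C x"
  proof (cases "X < Q")
    case True
    have "LX \<le> rX" using conv_L3[OF pconv Xpos LX rX] .
    also have "rX \<le> (p Q - p X) / (Q - X)" using conv_L2[OF pconv X0 True rX] .
    also have "\<dots> \<le> LQ" using conv_L1[OF pconv X0 True LQ] .
    finally have "g \<le> d" unfolding g_def d_def by simp
    then have "0 < d" using g0 by simp
    have "0 < s" using s0 sX Xpos
    proof -
      have "X \<le> of_nat N * s" unfolding X_def total_def
        using sum_bounded_above[of "{..<N}" x s] sle by auto
      then show ?thesis using Xpos s0 by (cases "s = 0") auto
    qed
    then have "0 < d * s\<^sup>2" using \<open>0 < d\<close> by simp
    then show ?thesis using WX Ilow K0 d0 by (smt (verit) zero_le_power2 mult_nonneg_nonneg divide_nonneg_pos)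
  next
    case False
    then have aX: "a = 0" unfolding a_def using pmono[of Q X] pnn[of X] Q X0 by simp
    have int: "p integrable_on {0..X}"
      by (rule integrable_continuous_interval) (rule continuous_on_subset[OF pc], auto)
    have "integral {0..Q} p + integral {Q..X} p = integral {0..X} p"
      using Henstock_Kurzweil_Integration.integral_combine[of 0 Q X p] Q False int by simp
    moreover have "0 \<le> integral {Q..X} p"
      by (rule integral_nonneg) (use int Q pnn in \<open>auto intro: integrable_on_subinterval\<close>)
    moreover have "integral {0..Q} p \<ge> p Q * Q - LQ * Q\<^sup>2 / 2" using int_lower[OF pconv pc Q(1) LQ] .
    moreover have "0 < - LQ * Q\<^sup>2 / 2" using g0 Q unfolding g_def by (simp add: mult_neg_pos)
    ultimately have "0 < I" unfolding I_def aX using Q by simp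
    then show ?thesis using WX K0 d0 by (smt (verit) zero_le_power2 mult_nonneg_nonneg)
  qed
  have "welfare N p C x \<le> welfare N p C y"
    using opt cc unfolding social_optimum_def cournot_candidate_def y_def by blast
  then have Wypos: "0 < welfare N p C y" using Wxpos by simp
  show ?thesis
    unfolding efficiency_def c_def[symmetric] f_def[symmetric] y_def[symmetric]
    using main Wypos by (simp add: le_divide_eq)
qed

end
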